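(* Let $f : M^* \to \mathbb{R}^3$ be a trivalent polyhedral surface with nonvanishing edge lengths, with the three face normals at every vertex linearly independent and adjacent faces satisfying $n_l \neq \pm n_r$. For $t \in (-\epsilon,\epsilon)$ let $f_t$ be the polyhedral surface obtained by offsetting every face in parallel by the same distance $t$ in the direction of its normal, i.e. with the same face normals $n$ and heights $h_\phi + t$. Then for every face $\phi \in F^*$, \[ H_\phi = \frac12 \frac{d}{dt}\mathrm{Area}(f_t(\phi))\Big|_{t=0}. \]
   Context: Let $M=(V,E,F)$ be a cellular decomposition of an oriented surface without boundary (each face having finitely many edges), and $M^*=(V^*,E^*,F^* )$ its dual decomposition; faces of $M^*$ correspond bijectively to vertices of $M$. A polyhedral surface is a map $f : V^* \to \mathbb{R}^3$ such that the vertices of each face $\phi \in F^*$ are coplanar (faces may self-intersect). It is trivalent if every vertex of $M^*$ has degree 3. For each face $\phi$, $n_\phi \in \mathbb{S}^2$ is its unit normal (compatible with the orientation) and $h_\phi = \langle f_i, n_\phi\rangle$ for any vertex $i$ of $\phi$ is its height; the vertices of a trivalent surface are determined by $(n,h)$ as intersections of three face planes. For an oriented edge from $i$ to $j$, the left face $l$ is the face whose positively oriented boundary traverses $i \to j$, and the right face $r$ is the other face containing the edge. The edge length is $\ell_{ij} = \|f_j - f_i\|$ and the dihedral angle $\alpha_{ij} \in (-\pi,\pi)$ is defined by $\cos\alpha_{ij} = \langle n_l, n_r\rangle$ and $\sin\alpha_{ij} = \langle n_l \times n_r, (f_j - f_i)/\|f_j-f_i\|\rangle$. The integrated mean curvature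 of a face is $H_\phi = \frac12\sum_{ij\in\partial\phi}\ell_{ij}\tan\frac{\alpha_{ij}}{2}$. The signed area of a face $\phi$ with boundary vertices $i_1,\dots,i_m$ in positive cyclic order is $\mathrm{Area}(f(\phi)) = \frac12\sum_{s=1}^m \langle f_{i_s}\times f_{i_{s+1}}, n_\phi\rangle$ (indices mod $m$). *)

theory Defs
  imports "HOL-Analysis.Analysis"
begin

text \<open>Combinatorial model of the dual decomposition M* of a cellular decomposition
of an oriented surface without boundary, as an oriented combinatorial map on darts
(oriented edges) of type 'e.  For a dart d: src d, tgt d are its initial and final
vertex, lf d is its left face (the face whose positively oriented boundary traverses
src d to tgt d), tw d is the reversed dart (so lf (tw d) is the right face), and
nxt d is the next dart along the positively oriented boundary of lf d.\<close>

definition trivalent_oriented_map ::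
  "('e \<Rightarrow> 'v) \<Rightarrow> ('e \<Rightarrow> 'v) \<Rightarrow> ('e \<Rightarrow> 'f) \<Rightarrow> ('e \<Rightarrow> 'e) \<Rightarrow> ('e \<Rightarrow> 'e) \<Rightarrow> bool" where
  "trivalent_oriented_map src tgt lf tw nxt \<longleftrightarrow>
     (\<forall>d. tw (tw d) = d \<and> tw d \<noteq> d \<and> src (tw d) = tgt d \<and> tgt (tw d) = src d) \<and>
     bij nxt \<and> (\<forall>d. src (nxt d) = tgt d \<and> lf (nxt d) = lf d) \<and>
     surj lf \<and> surj src \<and>
     (\<forall>\<phi>. finite {d. lf d = \<phi>}) \<and>
     (\<forall>d e. lf d = lf e \<longrightarrow> (\<exists>k. (nxt ^^ k) d = e)) \<and>
     (\<forall>d e. src d = src e \<longrightarrow> (\<exists>k. ((nxt \<circ> tw) ^^ k) d = e)) \<and>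
     (\<forall>i. card {d. src d = i} = 3)"

definition vertex_pos ::
  "('e \<Rightarrow> 'v) \<Rightarrow> ('e \<Rightarrow> 'f) \<Rightarrow> ('f \<Rightarrow> real^3) \<Rightarrow> ('f \<Rightarrow> real) \<Rightarrow> 'v \<Rightarrow> real^3" where
  "vertex_pos src lf n h i = (THE x. \<forall>d. src d = i \<longrightarrow> x \<bullet> n (lf d) = h (lf d))"

definition offset_surface ::
  "('e \<Rightarrow> 'v) \<Rightarrow> ('e \<Rightarrow> 'f) \<Rightarrow> ('f \<Rightarrow> real^3) \<Rightarrow> ('f \<Rightarrow> real) \<Rightarrow> real \<Rightarrow> 'v \<Rightarrow> real^3" where
  "offset_surface src lf n h t = vertex_pos src lf n (\<lambda>\<phi>. h \<phi> + t)"

definition edge_length ::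
  "('e \<Rightarrow> 'v) \<Rightarrow> ('e \<Rightarrow> 'v) \<Rightarrow> ('v \<Rightarrow> real^3) \<Rightarrow> 'e \<Rightarrow> real" where
  "edge_length src tgt f d = norm (f (tgt d) - f (src d))"

definition dihedral_angle ::
  "('e \<Rightarrow> 'v) \<Rightarrow> ('e \<Rightarrow> 'v) \<Rightarrow> ('e \<Rightarrow> 'f) \<Rightarrow> ('e \<Rightarrow> 'e) \<Rightarrow> ('v \<Rightarrow> real^3) \<Rightarrow> ('f \<Rightarrow> real^3) \<Rightarrow> 'e \<Rightarrow> real" where
  "dihedral_angle src tgt lf tw f n d =
     (THE \<alpha>. - pi < \<alpha> \<and> \<alpha> < pi \<and>
        cos \<alpha> = n (lf d) \<bullet> n (lf (tw d)) \<and>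
        sin \<alpha> = cross3 (n (lf d)) (n (lf (tw d))) \<bullet>
                  ((1 / norm (f (tgt d) - f (src d))) *\<^sub>R (f (tgt d) - f (src d))))"

definition face_mean_curvature ::
  "('e \<Rightarrow> 'v) \<Rightarrow> ('e \<Rightarrow> 'v) \<Rightarrow> ('e \<Rightarrow> 'f) \<Rightarrow> ('e \<Rightarrow> 'e) \<Rightarrow> ('v \<Rightarrow> real^3) \<Rightarrow> ('f \<Rightarrow> real^3) \<Rightarrow> 'f \<Rightarrow> real" where
  "face_mean_curvature src tgt lf tw f n \<phi> =
     1/2 * (\<Sum>d\<in>{d. lf d = \<phi>}. edge_length src tgt f d * tan (dihedral_angle src tgt lf tw f n d / 2))"

definition face_area ::
  "('e \<Rightarrow> 'v) \<Rightarrow> ('e \<Rightarrow> 'v) \<Rightarrow> ('e \<Rightarrow> 'f) \<Rightarrow> ('v \<Rightarrow> real^3) \<Rightarrow> ('f \<Rightarrow> real^3) \<Rightarrow> 'f \<Rightarrow> real" where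
  "face_area src tgt lf f n \<phi> =
     1/2 * (\<Sum>d\<in>{d. lf d = \<phi>}. cross3 (f (src d)) (f (tgt d)) \<bullet> n \<phi>)"

end

theory Submission imports Defs begin
lemma indep3_span:
  fixes N :: "(real^3) set"
  assumes "card N = 3" "independent N"
  shows "span N = UNIV"
proof -
  have "finite N" using assms(1) by (metis card.infinite zero_neq_numeral)
  then have "UNIV \<subseteq> span N"
    using card_eq_dim[of N UNIV] assms by simp
  then show ?thesis by auto
qed

lemma indep3_zero:
  fixes N :: "(real^3) set"
  assumes "card N = 3" "independent N" "\<forall>v\<in>N. x \<bullet> v = 0"
  shows "x = 0"
proof -
  have "x \<in> span N" using indep3_span[OF assms(1,2)] by auto
  moreover have "\<forall>y\<in>span N. x \<bullet> y = 0"
    using assms(3) by (metis orthogonal_def orthogonal_to_span)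
  ultimately show ?thesis by auto
qed

lemma indep3_dual:
  fixes N :: "(real^3) set"
  assumes "independent N"
  shows "\<exists>w. \<forall>v\<in>N. w \<bullet> v = 1"
proof -
  obtain g :: "real^3 \<Rightarrow> real" where g: "linear g" "\<forall>x\<in>N. g x = 1"
    using linear_independent_extend[OF assms, of "\<lambda>_. 1"] by auto
  have "\<forall>v\<in>N. adjoint g 1 \<bullet> v = 1"
    using adjoint_works[OF g(1)] g(2) by (metis inner_commute inner_real_def mult.right_neutral)
  then show ?thesis by blast
qed

lemma angle_exists_unique:
  fixes c s :: real
  assumes "c^2 + s^2 = 1" "c \<noteq> -1"
  shows "\<exists>!\<alpha>. - pi < \<alpha> \<and> \<alpha> < pi \<and> cos \<alpha> = c \<and> sin \<alpha> = s"
proof (rule ex_ex1I)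
  obtain t where t: "0 \<le> t" "t < 2*pi" "c = cos t" "s = sin t"
    using sincos_total_2pi[OF assms(1)] by blast
  have "t \<noteq> pi" using t assms(2) by auto
  show "\<exists>\<alpha>. - pi < \<alpha> \<and> \<alpha> < pi \<and> cos \<alpha> = c \<and> sin \<alpha> = s"
  proof (cases "t < pi")
    case True then show ?thesis using t by (intro exI[of _ t]) auto
  next
    case False
    then show ?thesis using t \<open>t \<noteq> pi\<close>
      by (intro exI[of _ "t - 2*pi"]) (auto simp: sin_diff cos_diff)
  qed
next
  fix a b assume a: "- pi < a \<and> a < pi \<and> cos a = c \<and> sin a = s"
    and b: "- pi < b \<and> b < pi \<and> cos b = c \<and> sin b = s"
  then obtain m :: int where m: "a = b + 2 * pi * m" using sin_cos_eq_iff by metis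
  have "\<bar>2 * pi * m\<bar> < 2 * pi" using a b m by auto
  then have "\<bar>real_of_int m\<bar> < 1" by (simp add: abs_mult)
  then have "m = 0" by linarith
  then show "a = b" using m by simp
qed

lemma edge_tan:
  fixes nl nr e w :: "real^3"
  assumes nl: "norm nl = 1" and nr: "norm nr = 1" and ne1: "nl \<noteq> nr" and ne2: "nl \<noteq> - nr"
    and e0: "e \<noteq> 0" and el: "e \<bullet> nl = 0" and er: "e \<bullet> nr = 0"
    and wl: "w \<bullet> nl = 1" and wr: "w \<bullet> nr = 1"
  shows "cross3 w e \<bullet> nl = norm e * tan ((THE \<alpha>. - pi < \<alpha> \<and> \<alpha> < pi \<and> cos \<alpha> = nl \<bullet> nr \<and>
            sin \<alpha> = cross3 nl nr \<bullet> ((1 / norm e) *\<^sub>R e)) / 2)"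
proof -
  define c where "c = nl \<bullet> nr"
  define k where "k = cross3 nl nr"
  define l where "l = norm e"
  define s where "s = k \<bullet> ((1 / l) *\<^sub>R e)"
  have l0: "l > 0" using e0 l_def by auto
  have nll: "nl \<bullet> nl = 1" using nl by (simp add: dot_square_norm)
  have nrr: "nr \<bullet> nr = 1" using nr by (simp add: dot_square_norm)
  have "(norm (nl - nr))^2 = 2 - 2 * c"
    by (simp add: power2_norm_eq_inner inner_diff nll nrr c_def inner_commute)
  moreover have "norm (nl - nr) > 0" using ne1 by auto
  ultimately have c1: "c < 1" by (smt (verit) zero_less_power)
  have "(norm (nl + nr))^2 = 2 + 2 * c"
    by (simp add: power2_norm_eq_inner inner_add nll nrr c_def inner_commute)
  moreover have "nl + nr \<noteq> 0" using ne2 by (simp add: eq_neg_iff_add_eq_0)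
  then have "norm (nl + nr) > 0" by simp
  ultimately have c2: "c > -1" by (smt (verit) zero_less_power)
  have kk: "k \<bullet> k = 1 - c^2"
    using norm_cross[of nl nr] nl nr by (simp add: k_def c_def power2_norm_eq_inner)
  have "c^2 < 1" using c1 c2 by (simp add: abs_square_less_1)
  then have kk0: "k \<bullet> k > 0" using kk by simp
  have ek0: "cross3 e k = 0"
    using Lagrange[of e nl nr] el er by (simp add: k_def inner_commute)
  have ke: "cross3 k e = 0" by (subst cross_skew) (simp add: ek0)
  have ek: "(k \<bullet> k) *\<^sub>R e = (k \<bullet> e) *\<^sub>R k"
    using Lagrange[of k e k] ek0 by (simp add: inner_commute)
  have "(k \<bullet> k)^2 * (e \<bullet> e) = (k \<bullet> k) * (k \<bullet> e)^2"
  proof -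
    have "((k \<bullet> k) *\<^sub>R e) \<bullet> ((k \<bullet> k) *\<^sub>R e) = ((k \<bullet> e) *\<^sub>R k) \<bullet> ((k \<bullet> e) *\<^sub>R k)"
      using ek by simp
    then show ?thesis by (simp add: power2_eq_square algebra_simps)
  qed
  moreover have ll: "e \<bullet> e = l * l" unfolding l_def by (simp add: dot_square_norm power2_eq_square)
  ultimately have "(k \<bullet> k) * ((k \<bullet> k) * (l * l)) = (k \<bullet> k) * (k \<bullet> e)^2"
    by (simp add: power2_eq_square algebra_simps)
  then have kel: "(k \<bullet> e)^2 = (k \<bullet> k) * l^2"
    using kk0 by (simp add: power2_eq_square)
  have s_eq: "s = (k \<bullet> e) / l" by (simp add: s_def)
  have ss: "s^2 = 1 - c^2" using kel kk l0 by (simp add: s_eq power_divide)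
  have ex: "\<exists>!\<alpha>. - pi < \<alpha> \<and> \<alpha> < pi \<and> cos \<alpha> = c \<and> sin \<alpha> = s"
    by (rule angle_exists_unique) (use ss c2 in auto)
  define \<alpha> where "\<alpha> = (THE \<alpha>. - pi < \<alpha> \<and> \<alpha> < pi \<and> cos \<alpha> = c \<and> sin \<alpha> = s)"
  have \<alpha>: "- pi < \<alpha> \<and> \<alpha> < pi \<and> cos \<alpha> = c \<and> sin \<alpha> = s"
    unfolding \<alpha>_def by (rule theI'[OF ex])
  have tan: "tan (\<alpha> / 2) = s / (c + 1)"
    using tan_half[of "\<alpha>/2"] \<alpha> by simp
  have kn0: "cross3 nl k = c *\<^sub>R nl - nr"
    using Lagrange[of nl nl nr] nll by (simp add: k_def c_def inner_commute)
  have kn: "cross3 k nl = nr - c *\<^sub>R nl" by (subst cross_skew) (simp add: kn0)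
  have e_eq: "e = ((k \<bullet> e) / (k \<bullet> k)) *\<^sub>R k"
  proof -
    have "e = inverse (k \<bullet> k) *\<^sub>R ((k \<bullet> k) *\<^sub>R e)" using kk0 by simp
    also have "\<dots> = inverse (k \<bullet> k) *\<^sub>R ((k \<bullet> e) *\<^sub>R k)" using ek by simp
    finally show ?thesis by (simp add: divide_inverse mult.commute)
  qed
  have "cross3 w e \<bullet> nl = ((k \<bullet> e) / (k \<bullet> k)) * (cross3 w k \<bullet> nl)"
    by (subst e_eq) (simp add: cross_mult_right)
  also have "cross3 w k \<bullet> nl = 1 - c"
    using cross_triple[of w k nl] kn wl wr by (simp add: inner_diff inner_commute)
  also have "(k \<bullet> e) / (k \<bullet> k) * (1 - c) = l * (s / (c + 1))"
  proof -
    have ke': "k \<bullet> e = s * l" using s_eq l0 by simp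
    have kk': "k \<bullet> k = (1 - c) * (c + 1)" using kk by (simp add: power2_eq_square algebra_simps)
    have "1 - c \<noteq> 0" "c + 1 \<noteq> 0" using c1 c2 by auto
    then have "(s * l) / ((1 - c) * (c + 1)) * (1 - c) = (s * l) / (c + 1)" by simp
    then show ?thesis unfolding ke' kk' by simp
  qed
  finally show ?thesis using tan by (simp add: \<alpha>_def c_def k_def s_def l_def)
qed


lemma sum_tgt_src:
  assumes fin: "finite S" and inj: "inj nxt" and into: "\<forall>d\<in>S. nxt d \<in> S"
    and st: "\<forall>d. src (nxt d) = tgt d"
  shows "(\<Sum>d\<in>S. G (tgt d)) = (\<Sum>d\<in>S. G (src d))"
proof -
  have img: "nxt ` S = S"
    using endo_inj_surj[OF fin] into inj by (auto intro: inj_on_subset)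
  have "(\<Sum>d\<in>S. G (tgt d)) = (\<Sum>d\<in>S. G (src (nxt d)))" using st by simp
  also have "\<dots> = (\<Sum>d\<in>nxt ` S. G (src d))"
    by (subst sum.reindex) (auto intro: inj_on_subset[OF inj])
  finally show ?thesis using img by simp
qed

lemma half_lemma: "(X::real) = Y \<Longrightarrow> X = Z \<Longrightarrow> 1/2 * X = 1/2 * (1/2 * (Y + Z))"
  by simp

theorem mainTheorem2:
  fixes src tgt :: "'e \<Rightarrow> 'v" and lf :: "'e \<Rightarrow> 'f" and tw nxt :: "'e \<Rightarrow> 'e"
    and f :: "'v \<Rightarrow> real^3" and n :: "'f \<Rightarrow> real^3" and h :: "'f \<Rightarrow> real"
  assumes comb: "trivalent_oriented_map src tgt lf tw nxt"
    and unit: "\<forall>\<phi>. norm (n \<phi>) = 1"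
    and planar: "\<forall>d. f (src d) \<bullet> n (lf d) = h (lf d)"
    and nonzero_edges: "\<forall>d. f (src d) \<noteq> f (tgt d)"
    and indep: "\<forall>i. card (n ` lf ` {d. src d = i}) = 3 \<and> independent (n ` lf ` {d. src d = i})"
    and adj: "\<forall>d. n (lf d) \<noteq> n (lf (tw d)) \<and> n (lf d) \<noteq> - n (lf (tw d))"
  shows "\<exists>D. ((\<lambda>t. face_area src tgt lf (offset_surface src lf n h t) n \<phi>) has_real_derivative D) (at 0)
            \<and> face_mean_curvature src tgt lf tw f n \<phi> = 1/2 * D"
proof -
  have twp: "\<And>d. tw (tw d) = d \<and> src (tw d) = tgt d \<and> tgt (tw d) = src d"
    using comb unfolding trivalent_oriented_map_def by blast
  have nxtp: "\<And>d. src (nxt d) = tgt d \<and> lf (nxt d) = lf d"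
    using comb unfolding trivalent_oriented_map_def by blast
  have bijn: "bij nxt" using comb unfolding trivalent_oriented_map_def by blast
  have finS: "finite {d. lf d = \<phi>}" using comb unfolding trivalent_oriented_map_def by blast
  define N where "N i = n ` lf ` {d. src d = i}" for i
  define w where "w i = (SOME w. \<forall>v\<in>N i. w \<bullet> v = 1)" for i
  have wN: "\<forall>v\<in>N i. w i \<bullet> v = 1" for i
  proof -
    have "independent (N i)" using indep by (simp add: N_def)
    then have "\<exists>w. \<forall>v\<in>N i. w \<bullet> v = 1" by (rule indep3_dual)
    then show ?thesis unfolding w_def by (rule someI_ex)
  qed
  have wp: "w (src d) \<bullet> n (lf d) = 1" for d
    using wN[of "src d"] unfolding N_def by auto
  have fp: "f (src d) \<bullet> n (lf d) = h (lf d)" for d using planar by blast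
  have off: "offset_surface src lf n h t i = f i + t *\<^sub>R w i" for t i
    unfolding offset_surface_def vertex_pos_def
  proof (rule the_equality)
    show "\<forall>d. src d = i \<longrightarrow> (f i + t *\<^sub>R w i) \<bullet> n (lf d) = h (lf d) + t"
      using fp wp by (auto simp: inner_add_left)
  next
    fix y assume y: "\<forall>d. src d = i \<longrightarrow> y \<bullet> n (lf d) = h (lf d) + t"
    have "\<forall>v\<in>N i. (y - (f i + t *\<^sub>R w i)) \<bullet> v = 0"
      using y fp wp unfolding N_def by (auto simp: inner_diff_left inner_add_left)
    moreover have "card (N i) = 3" "independent (N i)" using indep by (simp_all add: N_def)
    ultimately have "y - (f i + t *\<^sub>R w i) = 0"
      using indep3_zero by blast
    then show "y = f i + t *\<^sub>R w i" by simp
  qed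
  define S where "S = {d. lf d = \<phi>}"
  define a0 where "a0 d = cross3 (f (src d)) (f (tgt d)) \<bullet> n \<phi>" for d
  define a1 where "a1 d = (cross3 (w (src d)) (f (tgt d)) + cross3 (f (src d)) (w (tgt d))) \<bullet> n \<phi>" for d
  define a2 where "a2 d = cross3 (w (src d)) (w (tgt d)) \<bullet> n \<phi>" for d
  have trm: "cross3 (f (src d) + t *\<^sub>R w (src d)) (f (tgt d) + t *\<^sub>R w (tgt d)) \<bullet> n \<phi>
      = a0 d + t * a1 d + t^2 * a2 d" for d t
    by (simp add: a0_def a1_def a2_def cross_add_left cross_add_right cross_mult_left
        cross_mult_right inner_add_left power2_eq_square algebra_simps)
  have area: "face_area src tgt lf (offset_surface src lf n h t) n \<phi>
      = 1/2 * (sum a0 S + t * sum a1 S + t^2 * sum a2 S)" for t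
    unfolding face_area_def off S_def[symmetric] trm
    by (simp add: sum.distrib sum_distrib_left)
  have deriv: "((\<lambda>t. face_area src tgt lf (offset_surface src lf n h t) n \<phi>) has_real_derivative
      (1/2 * sum a1 S)) (at 0)"
    unfolding area by (auto intro!: derivative_eq_intros)
  define e where "e d = f (tgt d) - f (src d)" for d
  have edge: "edge_length src tgt f d * tan (dihedral_angle src tgt lf tw f n d / 2)
       = cross3 (w (src d)) (e d) \<bullet> n (lf d)
     \<and> edge_length src tgt f d * tan (dihedral_angle src tgt lf tw f n d / 2)
       = cross3 (w (tgt d)) (e d) \<bullet> n (lf d)" for d
  proof -
    have el: "e d \<bullet> n (lf d) = 0"
      using fp[of d] fp[of "nxt d"] nxtp[of d] by (simp add: e_def inner_diff_left)
    have er: "e d \<bullet> n (lf (tw d)) = 0"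
      using fp[of "tw d"] fp[of "nxt (tw d)"] nxtp[of "tw d"] twp[of d]
      by (simp add: e_def inner_diff_left)
    have w1: "w (src d) \<bullet> n (lf d) = 1" "w (src d) \<bullet> n (lf (tw d)) = 1"
      using wp[of d] wp[of "nxt (tw d)"] nxtp[of "tw d"] twp[of d] by auto
    have w2: "w (tgt d) \<bullet> n (lf d) = 1" "w (tgt d) \<bullet> n (lf (tw d)) = 1"
      using wp[of "nxt d"] wp[of "tw d"] nxtp[of d] twp[of d] by auto
    have e0: "e d \<noteq> 0" using nonzero_edges[rule_format, of d] by (simp add: e_def)
    note E = edge_tan[OF unit[rule_format] unit[rule_format] adj[rule_format, THEN conjunct1]
        adj[rule_format, THEN conjunct2] e0 el er]
    show ?thesis
      using E[OF w1] E[OF w2]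
      by (simp add: edge_length_def dihedral_angle_def e_def)
  qed
  have nS: "\<And>d. d \<in> S \<Longrightarrow> n (lf d) = n \<phi>" using S_def by auto
  have sumeq: "(\<Sum>d\<in>S. cross3 (w (tgt d)) (f (tgt d)) \<bullet> n \<phi>) = (\<Sum>d\<in>S. cross3 (w (src d)) (f (src d)) \<bullet> n \<phi>)"
    by (rule sum_tgt_src[where S=S and nxt=nxt and src=src and tgt=tgt and G = "\<lambda>i. cross3 (w i) (f i) \<bullet> n \<phi>"])
      (use finS bijn nxtp in \<open>auto simp: S_def bij_is_inj\<close>)
  have A1: "sum a1 S = (\<Sum>d\<in>S. cross3 (w (src d)) (e d) \<bullet> n \<phi>) + (\<Sum>d\<in>S. cross3 (w (tgt d)) (e d) \<bullet> n \<phi>)"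
  proof -
    have "(\<Sum>d\<in>S. cross3 (w (src d)) (e d) \<bullet> n \<phi>) + (\<Sum>d\<in>S. cross3 (w (tgt d)) (e d) \<bullet> n \<phi>)
      = sum a1 S + ((\<Sum>d\<in>S. cross3 (w (tgt d)) (f (tgt d)) \<bullet> n \<phi>) - (\<Sum>d\<in>S. cross3 (w (src d)) (f (src d)) \<bullet> n \<phi>))"
    proof -
      have pt: "cross3 (w (src d)) (e d) \<bullet> n \<phi> + cross3 (w (tgt d)) (e d) \<bullet> n \<phi>
        = a1 d + (cross3 (w (tgt d)) (f (tgt d)) \<bullet> n \<phi> - cross3 (w (src d)) (f (src d)) \<bullet> n \<phi>)" for d
        using cross_skew[of "f (src d)" "w (tgt d)"]
        by (simp add: a1_def e_def Cross3.right_diff_distrib inner_diff_left inner_add_left)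
      show ?thesis
        by (simp add: pt sum.distrib[symmetric] sum_subtractf[symmetric])
    qed
    then show ?thesis using sumeq by simp
  qed
  have H: "face_mean_curvature src tgt lf tw f n \<phi> = 1/2 * (1/2 * sum a1 S)"
  proof -
    have "(\<Sum>d\<in>S. edge_length src tgt f d * tan (dihedral_angle src tgt lf tw f n d / 2))
        = (\<Sum>d\<in>S. cross3 (w (src d)) (e d) \<bullet> n \<phi>)"
      by (rule sum.cong[OF refl]) (use edge[THEN conjunct1] nS in simp)
    moreover have "(\<Sum>d\<in>S. edge_length src tgt f d * tan (dihedral_angle src tgt lf tw f n d / 2))
        = (\<Sum>d\<in>S. cross3 (w (tgt d)) (e d) \<bullet> n \<phi>)"
      by (rule sum.cong[OF refl]) (use edge[THEN conjunct2] nS in simp)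
    ultimately show ?thesis
      unfolding face_mean_curvature_def S_def[symmetric] A1 by (rule half_lemma)
  qed
  show ?thesis by (intro exI[of _ "1/2 * sum a1 S"] conjI deriv H)
qed

end
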